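(* Let $X$ be a locally connected space and let $\mathcal{G}, \mathcal{F}, \mathcal{F}'$ be locally constant sheaves of $k$-vector spaces on $X$. Let $\Phi = (\Phi_x)_{x\in X}$ be a stalkwise isomorphism $\mathcal{G}\to\mathcal{F}$ and $\Psi = (\Psi_x)_{x\in X}$ a stalkwise isomorphism $\mathcal{G}\to\mathcal{F}'$, and suppose $\Phi$ and $\Psi$ have the same deviation, i.e. for all $x,y\in X$ and every connected open set $U\ni x,y$ which is simple for all three sheaves, $\upsilon(\Phi)^U_{yx} = \upsilon(\Psi)^U_{yx}$. Then there is a unique isomorphism of sheaves $T\colon \mathcal{F}\to\mathcal{F}'$ such that $\Psi_x = T_x\Phi_x$ for all $x\in X$.
   Context: An open set $U$ is simple for a sheaf $\mathcal{S}$ if $\mathcal{S}|_U$ is isomorphic to a constant sheaf; if $U$ is also connected, each stalk restriction $\mathcal{S}_{x\in U}\colon \mathcal{S}(U)\to\mathcal{S}_x$ ($x\in U$) is an isomorphism. A stalkwise isomorphism $\Phi\colon\mathcal{G}\to\mathcal{F}$ is a family of linear isomorphisms $\Phi_x\colon\mathcal{G}_x\to\mathcal{F}_x$, $x\in X$, not required to be natural. Its deviation assigns to $x,y\in X$ and a connected open $U\ni x,y$ simple for $\mathcal{G}$ and $\mathcal{F}$ the automorphism $\upsilon(\Phi)^U_{yx} = \mathcal{G}_{y\in U}^{-1}\,\Phi_y^{-1}\,\mathcal{F}_{y\in U}\,\mathcal{F}_{x\in U}^{-1}\,\Phi_x\,\mathcal{G}_{x\in U}$ of $\mathcal{G}(U)$.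 *)

theory Defs
  imports "HOL-Analysis.Analysis" "HOL-Library.Function_Algebras"
begin

text \<open>A presheaf of k-vector spaces on a topological space (the type 'a, X = UNIV):
  sections over U form a linear subspace of an ambient k-vector space 'v
  (scalar multiplication scl), res U V s is the restriction of s from U to V.\<close>

record ('a, 'k, 'v) sheaf =
  sec :: "'a set \<Rightarrow> 'v set"
  res :: "'a set \<Rightarrow> 'a set \<Rightarrow> 'v \<Rightarrow> 'v"
  scl :: "'k \<Rightarrow> 'v \<Rightarrow> 'v"

definition is_sheaf :: "('a::topological_space, 'k::field, 'v::ab_group_add) sheaf \<Rightarrow> bool" where
  "is_sheaf S \<longleftrightarrow>
     vector_space (scl S) \<and>
     (\<forall>U. open U \<longrightarrow> module.subspace (scl S) (sec S U)) \<and>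
     (\<forall>U V. open U \<and> open V \<and> V \<subseteq> U \<longrightarrow>
        (\<forall>s\<in>sec S U. res S U V s \<in> sec S V) \<and>
        (\<forall>s\<in>sec S U. \<forall>t\<in>sec S U. res S U V (s + t) = res S U V s + res S U V t) \<and>
        (\<forall>c. \<forall>s\<in>sec S U. res S U V (scl S c s) = scl S c (res S U V s))) \<and>
     (\<forall>U. open U \<longrightarrow> (\<forall>s\<in>sec S U. res S U U s = s)) \<and>
     (\<forall>U V W. open U \<and> open V \<and> open W \<and> W \<subseteq> V \<and> V \<subseteq> U \<longrightarrow>
        (\<forall>s\<in>sec S U. res S V W (res S U V s) = res S U W s)) \<and>
     \<comment> \<open>locality\<close>
     (\<forall>U \<C>. open U \<and> (\<forall>V\<in>\<C>. open V) \<and> \<Union>\<C> = U \<longrightarrow>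
        (\<forall>s\<in>sec S U. \<forall>t\<in>sec S U. (\<forall>V\<in>\<C>. res S U V s = res S U V t) \<longrightarrow> s = t)) \<and>
     \<comment> \<open>gluing\<close>
     (\<forall>U \<C> f. open U \<and> (\<forall>V\<in>\<C>. open V) \<and> \<Union>\<C> = U \<and> (\<forall>V\<in>\<C>. f V \<in> sec S V) \<and>
        (\<forall>V\<in>\<C>. \<forall>W\<in>\<C>. res S V (V \<inter> W) (f V) = res S W (V \<inter> W) (f W)) \<longrightarrow>
        (\<exists>s\<in>sec S U. \<forall>V\<in>\<C>. res S U V s = f V))"

definition sheaf_hom_on ::
  "'a::topological_space set \<Rightarrow> ('a, 'k::field, 'v::ab_group_add) sheaf \<Rightarrow> ('a, 'k, 'w::ab_group_add) sheaf
   \<Rightarrow> ('a set \<Rightarrow> 'v \<Rightarrow> 'w) \<Rightarrow> bool" where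
  "sheaf_hom_on W S S' T \<longleftrightarrow>
     (\<forall>V. open V \<and> V \<subseteq> W \<longrightarrow>
        (\<forall>s\<in>sec S V. T V s \<in> sec S' V) \<and>
        (\<forall>s\<in>sec S V. \<forall>t\<in>sec S V. T V (s + t) = T V s + T V t) \<and>
        (\<forall>c. \<forall>s\<in>sec S V. T V (scl S c s) = scl S' c (T V s))) \<and>
     (\<forall>V V'. open V \<and> open V' \<and> V' \<subseteq> V \<and> V \<subseteq> W \<longrightarrow>
        (\<forall>s\<in>sec S V. T V' (res S V V' s) = res S' V V' (T V s)))"

definition sheaf_iso_on ::
  "'a::topological_space set \<Rightarrow> ('a, 'k::field, 'v::ab_group_add) sheaf \<Rightarrow> ('a, 'k, 'w::ab_group_add) sheaf
   \<Rightarrow> ('a set \<Rightarrow> 'v \<Rightarrow> 'w) \<Rightarrow> bool" where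
  "sheaf_iso_on W S S' T \<longleftrightarrow> sheaf_hom_on W S S' T \<and>
     (\<forall>V. open V \<and> V \<subseteq> W \<longrightarrow> bij_betw (T V) (sec S V) (sec S' V))"

text \<open>The constant sheaf with stalk E (a subspace of 'v) on the open set U:
  sections over V are the locally constant functions V \<rightarrow> E (extended by 0 off V).\<close>

definition const_sheaf :: "('k \<Rightarrow> 'v \<Rightarrow> 'v) \<Rightarrow> 'v::ab_group_add set
   \<Rightarrow> ('a::topological_space, 'k, 'a \<Rightarrow> 'v) sheaf" where
  "const_sheaf sc E =
     \<lparr> sec = (\<lambda>V. {f. (\<forall>x\<in>V. f x \<in> E) \<and> (\<forall>x. x \<notin> V \<longrightarrow> f x = 0) \<and>
                     (\<forall>x\<in>V. \<exists>W. open W \<and> x \<in> W \<and> W \<subseteq> V \<and> (\<forall>y\<in>W. f y = f x))}),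
       res = (\<lambda>V W f x. if x \<in> W then f x else 0),
       scl = (\<lambda>c f x. sc c (f x)) \<rparr>"

definition simple_for :: "('a::topological_space, 'k::field, 'v::ab_group_add) sheaf \<Rightarrow> 'a set \<Rightarrow> bool" where
  "simple_for S U \<longleftrightarrow> (\<exists>E T. module.subspace (scl S) E \<and> sheaf_iso_on U S (const_sheaf (scl S) E) T)"

definition locally_constant_sheaf :: "('a::topological_space, 'k::field, 'v::ab_group_add) sheaf \<Rightarrow> bool" where
  "locally_constant_sheaf S \<longleftrightarrow> is_sheaf S \<and> (\<forall>x. \<exists>U. open U \<and> x \<in> U \<and> simple_for S U)"

text \<open>Stalks as sets of germs (equivalence classes of pairs (V,t)).\<close>

definition germ :: "('a::topological_space, 'k, 'v) sheaf \<Rightarrow> 'a \<Rightarrow> 'a set \<Rightarrow> 'v \<Rightarrow> ('a set \<times> 'v) set" where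
  "germ S x U s = {(V, t). open V \<and> x \<in> V \<and> t \<in> sec S V \<and>
      (\<exists>W. open W \<and> x \<in> W \<and> W \<subseteq> U \<inter> V \<and> res S U W s = res S V W t)}"

definition stalk :: "('a::topological_space, 'k, 'v) sheaf \<Rightarrow> 'a \<Rightarrow> ('a set \<times> 'v) set set" where
  "stalk S x = {germ S x U s | U s. open U \<and> x \<in> U \<and> s \<in> sec S U}"

definition stalk_add :: "('a::topological_space, 'k, 'v::ab_group_add) sheaf \<Rightarrow> 'a
    \<Rightarrow> ('a set \<times> 'v) set \<Rightarrow> ('a set \<times> 'v) set \<Rightarrow> ('a set \<times> 'v) set" where
  "stalk_add S x a b = (THE c. \<exists>U s t. open U \<and> x \<in> U \<and> s \<in> sec S U \<and> t \<in> sec S U \<and>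
       a = germ S x U s \<and> b = germ S x U t \<and> c = germ S x U (s + t))"

definition stalk_scale :: "('a::topological_space, 'k, 'v) sheaf \<Rightarrow> 'a
    \<Rightarrow> 'k \<Rightarrow> ('a set \<times> 'v) set \<Rightarrow> ('a set \<times> 'v) set" where
  "stalk_scale S x c a = (THE d. \<exists>U s. open U \<and> x \<in> U \<and> s \<in> sec S U \<and>
       a = germ S x U s \<and> d = germ S x U (scl S c s))"

definition stalk_lin_iso :: "('a::topological_space, 'k, 'v::ab_group_add) sheaf \<Rightarrow> ('a, 'k, 'w::ab_group_add) sheaf
    \<Rightarrow> 'a \<Rightarrow> (('a set \<times> 'v) set \<Rightarrow> ('a set \<times> 'w) set) \<Rightarrow> bool" where
  "stalk_lin_iso S S' x \<phi> \<longleftrightarrow> bij_betw \<phi> (stalk S x) (stalk S' x) \<and>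
     (\<forall>a\<in>stalk S x. \<forall>b\<in>stalk S x. \<phi> (stalk_add S x a b) = stalk_add S' x (\<phi> a) (\<phi> b)) \<and>
     (\<forall>c. \<forall>a\<in>stalk S x. \<phi> (stalk_scale S x c a) = stalk_scale S' x c (\<phi> a))"

text \<open>Stalkwise isomorphism: a (not necessarily natural) family of linear isomorphisms of stalks.\<close>

definition stalkwise_iso :: "('a::topological_space, 'k, 'v::ab_group_add) sheaf \<Rightarrow> ('a, 'k, 'w::ab_group_add) sheaf
    \<Rightarrow> ('a \<Rightarrow> ('a set \<times> 'v) set \<Rightarrow> ('a set \<times> 'w) set) \<Rightarrow> bool" where
  "stalkwise_iso S S' \<Phi> \<longleftrightarrow> (\<forall>x. stalk_lin_iso S S' x (\<Phi> x))"

text \<open>Deviation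
  upsilon(Phi)^U_yx = G_{y in U}^-1 Phi_y^-1 F_{y in U} F_{x in U}^-1 Phi_x G_{x in U},
  as a map on G(U); the stalk restriction S_{x in U} is s \<mapsto> germ S x U s.\<close>

definition deviation :: "('a::topological_space, 'k, 'v::ab_group_add) sheaf \<Rightarrow> ('a, 'k, 'w::ab_group_add) sheaf
    \<Rightarrow> ('a \<Rightarrow> ('a set \<times> 'v) set \<Rightarrow> ('a set \<times> 'w) set) \<Rightarrow> 'a set \<Rightarrow> 'a \<Rightarrow> 'a \<Rightarrow> 'v \<Rightarrow> 'v" where
  "deviation G F \<Phi> U y x s =
     inv_into (sec G U) (germ G y U)
       (inv_into (stalk G y) (\<Phi> y)
         (germ F y U
           (inv_into (sec F U) (germ F x U)
             (\<Phi> x (germ G x U s)))))"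

definition stalk_map :: "('a::topological_space, 'k, 'v) sheaf \<Rightarrow> ('a, 'k, 'w) sheaf
    \<Rightarrow> ('a set \<Rightarrow> 'v \<Rightarrow> 'w) \<Rightarrow> 'a \<Rightarrow> ('a set \<times> 'v) set \<Rightarrow> ('a set \<times> 'w) set" where
  "stalk_map S S' T x a = (THE b. \<exists>U s. open U \<and> x \<in> U \<and> s \<in> sec S U \<and>
       a = germ S x U s \<and> b = germ S' x U (T U s))"

end

theory Submission
  imports Defs
begin

lemma is_sheafD:
  assumes "is_sheaf S"
  shows is_sheafD_res: "\<forall>U V. open U \<and> open V \<and> V \<subseteq> U \<longrightarrow>
        (\<forall>s\<in>sec S U. res S U V s \<in> sec S V) \<and>
        (\<forall>s\<in>sec S U. \<forall>t\<in>sec S U. res S U V (s + t) = res S U V s + res S U V t) \<and>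
        (\<forall>c. \<forall>s\<in>sec S U. res S U V (scl S c s) = scl S c (res S U V s))"
  and is_sheafD_id: "\<forall>U. open U \<longrightarrow> (\<forall>s\<in>sec S U. res S U U s = s)"
  and is_sheafD_trans: "\<forall>U V W. open U \<and> open V \<and> open W \<and> W \<subseteq> V \<and> V \<subseteq> U \<longrightarrow>
        (\<forall>s\<in>sec S U. res S V W (res S U V s) = res S U W s)"
  and is_sheafD_loc: "\<forall>U \<C>. open U \<and> (\<forall>V\<in>\<C>. open V) \<and> \<Union>\<C> = U \<longrightarrow>
        (\<forall>s\<in>sec S U. \<forall>t\<in>sec S U. (\<forall>V\<in>\<C>. res S U V s = res S U V t) \<longrightarrow> s = t)"
  and is_sheafD_glue: "\<forall>U \<C> f. open U \<and> (\<forall>V\<in>\<C>. open V) \<and> \<Union>\<C> = U \<and> (\<forall>V\<in>\<C>. f V \<in> sec S V) \<and>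
        (\<forall>V\<in>\<C>. \<forall>W\<in>\<C>. res S V (V \<inter> W) (f V) = res S W (V \<inter> W) (f W)) \<longrightarrow>
        (\<exists>s\<in>sec S U. \<forall>V\<in>\<C>. res S U V s = f V)"
  and is_sheafD_vs: "vector_space (scl S)"
  and is_sheafD_sub: "\<forall>U. open U \<longrightarrow> module.subspace (scl S) (sec S U)"
  using assms unfolding is_sheaf_def by - ((elim conjE), assumption)+

lemma sh_res_sec: "is_sheaf S \<Longrightarrow> open U \<Longrightarrow> open V \<Longrightarrow> V \<subseteq> U \<Longrightarrow> s \<in> sec S U \<Longrightarrow> res S U V s \<in> sec S V"
  by (drule is_sheafD_res, erule allE[of _ U], erule allE[of _ V]) simp
lemma sh_res_add: "is_sheaf S \<Longrightarrow> open U \<Longrightarrow> open V \<Longrightarrow> V \<subseteq> U \<Longrightarrow> s \<in> sec S U \<Longrightarrow> t \<in> sec S U \<Longrightarrow> res S U V (s + t) = res S U V s + res S U V t"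
  by (drule is_sheafD_res, erule allE[of _ U], erule allE[of _ V]) simp
lemma sh_res_scl: "is_sheaf S \<Longrightarrow> open U \<Longrightarrow> open V \<Longrightarrow> V \<subseteq> U \<Longrightarrow> s \<in> sec S U \<Longrightarrow> res S U V (scl S c s) = scl S c (res S U V s)"
  by (drule is_sheafD_res, erule allE[of _ U], erule allE[of _ V]) simp
lemma sh_res_id: "is_sheaf S \<Longrightarrow> open U \<Longrightarrow> s \<in> sec S U \<Longrightarrow> res S U U s = s"
  by (drule is_sheafD_id, erule allE[of _ U]) simp
lemma sh_res_trans: "is_sheaf S \<Longrightarrow> open U \<Longrightarrow> open V \<Longrightarrow> open W \<Longrightarrow> W \<subseteq> V \<Longrightarrow> V \<subseteq> U \<Longrightarrow> s \<in> sec S U \<Longrightarrow> res S V W (res S U V s) = res S U W s"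
  by (drule is_sheafD_trans, erule allE[of _ U], erule allE[of _ V], erule allE[of _ W]) simp
lemma sh_loc: "is_sheaf S \<Longrightarrow> open U \<Longrightarrow> (\<forall>V\<in>C. open V) \<Longrightarrow> \<Union>C = U \<Longrightarrow> s \<in> sec S U \<Longrightarrow> t \<in> sec S U \<Longrightarrow> (\<forall>V\<in>C. res S U V s = res S U V t) \<Longrightarrow> s = t"
  by (drule is_sheafD_loc, erule allE[of _ U], erule allE[of _ C]) simp
lemma sh_glue: "is_sheaf S \<Longrightarrow> open U \<Longrightarrow> (\<forall>V\<in>C. open V) \<Longrightarrow> \<Union>C = U \<Longrightarrow> (\<forall>V\<in>C. f V \<in> sec S V) \<Longrightarrow>
        (\<forall>V\<in>C. \<forall>W\<in>C. res S V (V \<inter> W) (f V) = res S W (V \<inter> W) (f W)) \<Longrightarrow>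
        (\<exists>s\<in>sec S U. \<forall>V\<in>C. res S U V s = f V)"
  by (drule is_sheafD_glue, erule allE[of _ U], erule allE[of _ C], erule allE[of _ f]) simp
lemma sh_sub: "is_sheaf S \<Longrightarrow> open U \<Longrightarrow> module.subspace (scl S) (sec S U)"
  by (drule is_sheafD_sub, erule allE[of _ U]) simp
lemma sh_vs: "is_sheaf S \<Longrightarrow> vector_space (scl S)"
  by (rule is_sheafD_vs)
lemma sh_add_sec: "is_sheaf S \<Longrightarrow> open U \<Longrightarrow> s \<in> sec S U \<Longrightarrow> t \<in> sec S U \<Longrightarrow> s + t \<in> sec S U"
  by (metis module.subspace_add module_iff_vector_space sh_sub sh_vs)
lemma sh_scl_sec: "is_sheaf S \<Longrightarrow> open U \<Longrightarrow> s \<in> sec S U \<Longrightarrow> scl S c s \<in> sec S U"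
  by (metis module.subspace_scale module_iff_vector_space sh_sub sh_vs)

lemma res_shrink:
  assumes S: "is_sheaf S" and "open U" "open U'" "open W1" "open W" "W \<subseteq> W1" "W1 \<subseteq> U" "W1 \<subseteq> U'"
    "s \<in> sec S U" "s' \<in> sec S U'" "res S U W1 s = res S U' W1 s'"
  shows "res S U W s = res S U' W s'"
proof -
  have "res S U W s = res S W1 W (res S U W1 s)" using sh_res_trans[OF S, of U W1 W s] assms by simp
  also have "\<dots> = res S W1 W (res S U' W1 s')" using assms by simp
  also have "\<dots> = res S U' W s'" using sh_res_trans[OF S, of U' W1 W s'] assms by simp
  finally show ?thesis .
qed

lemma germ_eq_iff:
  assumes S: "is_sheaf S" and "open U" "open V" "x \<in> U" "x \<in> V" "s \<in> sec S U" "t \<in> sec S V"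
  shows "germ S x U s = germ S x V t \<longleftrightarrow> (\<exists>W. open W \<and> x \<in> W \<and> W \<subseteq> U \<inter> V \<and> res S U W s = res S V W t)"
proof
  assume e: "germ S x U s = germ S x V t"
  have "(V, t) \<in> germ S x V t" unfolding germ_def using assms sh_res_id[OF S, of V t] by auto
  then have "(V,t) \<in> germ S x U s" using e by simp
  then show "\<exists>W. open W \<and> x \<in> W \<and> W \<subseteq> U \<inter> V \<and> res S U W s = res S V W t" unfolding germ_def by auto
next
  assume "\<exists>W. open W \<and> x \<in> W \<and> W \<subseteq> U \<inter> V \<and> res S U W s = res S V W t"
  then obtain W where W: "open W" "x \<in> W" "W \<subseteq> U \<inter> V" "res S U W s = res S V W t" by blast
  have *: "(\<exists>W'. open W' \<and> x \<in> W' \<and> W' \<subseteq> U \<inter> V' \<and> res S U W' s = res S V' W' t') \<longleftrightarrow>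
           (\<exists>W'. open W' \<and> x \<in> W' \<and> W' \<subseteq> V \<inter> V' \<and> res S V W' t = res S V' W' t')"
    if "open V'" "x \<in> V'" "t' \<in> sec S V'" for V' t'
  proof
    assume "\<exists>W'. open W' \<and> x \<in> W' \<and> W' \<subseteq> U \<inter> V' \<and> res S U W' s = res S V' W' t'"
    then obtain W' where W': "open W'" "x \<in> W'" "W' \<subseteq> U \<inter> V'" "res S U W' s = res S V' W' t'" by blast
    let ?Z = "W \<inter> W'"
    have "res S V ?Z t = res S W ?Z (res S V W t)" using sh_res_trans[OF S, of V W ?Z t] W W' assms by (auto simp: open_Int)
    also have "\<dots> = res S W ?Z (res S U W s)" using W by simp
    also have "\<dots> = res S U ?Z s" using sh_res_trans[OF S, of U W ?Z s] W W' assms by (auto simp: open_Int)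
    also have "\<dots> = res S W' ?Z (res S U W' s)" using sh_res_trans[OF S, of U W' ?Z s] W W' assms by (auto simp: open_Int)
    also have "\<dots> = res S W' ?Z (res S V' W' t')" using W' by simp
    also have "\<dots> = res S V' ?Z t'" using sh_res_trans[OF S, of V' W' ?Z t'] W W' assms that by (auto simp: open_Int)
    finally show "\<exists>W'. open W' \<and> x \<in> W' \<and> W' \<subseteq> V \<inter> V' \<and> res S V W' t = res S V' W' t'"
      using W W' by (intro exI[of _ ?Z]) auto
  next
    assume "\<exists>W'. open W' \<and> x \<in> W' \<and> W' \<subseteq> V \<inter> V' \<and> res S V W' t = res S V' W' t'"
    then obtain W' where W': "open W'" "x \<in> W'" "W' \<subseteq> V \<inter> V'" "res S V W' t = res S V' W' t'" by blast
    let ?Z = "W \<inter> W'"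
    have "res S U ?Z s = res S W ?Z (res S U W s)" using sh_res_trans[OF S, of U W ?Z s] W W' assms by (auto simp: open_Int)
    also have "\<dots> = res S W ?Z (res S V W t)" using W by simp
    also have "\<dots> = res S V ?Z t" using sh_res_trans[OF S, of V W ?Z t] W W' assms by (auto simp: open_Int)
    also have "\<dots> = res S W' ?Z (res S V W' t)" using sh_res_trans[OF S, of V W' ?Z t] W W' assms by (auto simp: open_Int)
    also have "\<dots> = res S W' ?Z (res S V' W' t')" using W' by simp
    also have "\<dots> = res S V' ?Z t'" using sh_res_trans[OF S, of V' W' ?Z t'] W W' assms that by (auto simp: open_Int)
    finally show "\<exists>W'. open W' \<and> x \<in> W' \<and> W' \<subseteq> U \<inter> V' \<and> res S U W' s = res S V' W' t'"
      using W W' by (intro exI[of _ ?Z]) auto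
  qed
  show "germ S x U s = germ S x V t" unfolding germ_def using * by auto
qed

lemma germ_res:
  assumes S: "is_sheaf S" and "open U" "open W" "x \<in> W" "W \<subseteq> U" "s \<in> sec S U"
  shows "germ S x W (res S U W s) = germ S x U s"
  using assms sh_res_sec[OF S] sh_res_trans[OF S, of U W W s] sh_res_id[OF S]
  by (subst germ_eq_iff) (auto intro!: exI[of _ W])

lemma germ_in_stalk: "open U \<Longrightarrow> x \<in> U \<Longrightarrow> s \<in> sec S U \<Longrightarrow> germ S x U s \<in> stalk S x"
  unfolding stalk_def by blast

lemma germ_locality:
  assumes S: "is_sheaf S" and "open V" "s \<in> sec S V" "t \<in> sec S V" "\<forall>x\<in>V. germ S x V s = germ S x V t"
  shows "s = t"
proof -
  have "\<forall>x\<in>V. \<exists>W. open W \<and> x \<in> W \<and> W \<subseteq> V \<and> res S V W s = res S V W t"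
    using assms germ_eq_iff[OF S] by (metis Int_absorb)
  then obtain Wf where Wf: "\<And>x. x\<in>V \<Longrightarrow> open (Wf x) \<and> x \<in> Wf x \<and> Wf x \<subseteq> V \<and> res S V (Wf x) s = res S V (Wf x) t"
    by metis
  show ?thesis
    apply (rule sh_loc[OF S \<open>open V\<close>, of "Wf ` V"])
    using Wf assms by auto
qed

lemma germ_add:
  assumes S: "is_sheaf S" and "open U" "x \<in> U" "s \<in> sec S U" "t \<in> sec S U"
  shows "stalk_add S x (germ S x U s) (germ S x U t) = germ S x U (s + t)"
  unfolding stalk_add_def
proof (rule the_equality)
  show "\<exists>U' s' t'. open U' \<and> x \<in> U' \<and> s' \<in> sec S U' \<and> t' \<in> sec S U' \<and>
     germ S x U s = germ S x U' s' \<and> germ S x U t = germ S x U' t' \<and> germ S x U (s + t) = germ S x U' (s' + t')"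
    using assms by blast
next
  fix c assume "\<exists>U' s' t'. open U' \<and> x \<in> U' \<and> s' \<in> sec S U' \<and> t' \<in> sec S U' \<and>
     germ S x U s = germ S x U' s' \<and> germ S x U t = germ S x U' t' \<and> c = germ S x U' (s' + t')"
  then obtain U' s' t' where H: "open U'" "x \<in> U'" "s' \<in> sec S U'" "t' \<in> sec S U'"
     "germ S x U s = germ S x U' s'" "germ S x U t = germ S x U' t'" "c = germ S x U' (s' + t')" by blast
  obtain W1 where W1: "open W1" "x \<in> W1" "W1 \<subseteq> U \<inter> U'" "res S U W1 s = res S U' W1 s'"
    using H germ_eq_iff[OF S] assms by metis
  obtain W2 where W2: "open W2" "x \<in> W2" "W2 \<subseteq> U \<inter> U'" "res S U W2 t = res S U' W2 t'"
    using H germ_eq_iff[OF S] assms by metis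
  let ?W = "W1 \<inter> W2"
  have a: "res S U ?W s = res S U' ?W s'"
    using res_shrink[OF S, of U U' W1 ?W s s'] W1 W2 H assms by (auto simp: open_Int)
  have b: "res S U ?W t = res S U' ?W t'"
    using res_shrink[OF S, of U U' W2 ?W t t'] W1 W2 H assms by (auto simp: open_Int)
  have sub: "?W \<subseteq> U" "?W \<subseteq> U'" "open ?W" using W1 W2 by auto
  have "res S U ?W (s + t) = res S U' ?W (s' + t')"
    using a b sh_res_add[OF S assms(2) sub(3) sub(1) assms(4,5)] sh_res_add[OF S H(1) sub(3) sub(2) H(3,4)] by simp
  then show "c = germ S x U (s + t)" unfolding H(7)
    using W1 W2 H assms sh_add_sec[OF S] by (subst germ_eq_iff[OF S]) (auto intro!: exI[of _ ?W])
qed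

lemma germ_scl:
  assumes S: "is_sheaf S" and "open U" "x \<in> U" "s \<in> sec S U"
  shows "stalk_scale S x c (germ S x U s) = germ S x U (scl S c s)"
  unfolding stalk_scale_def
proof (rule the_equality)
  show "\<exists>U' s'. open U' \<and> x \<in> U' \<and> s' \<in> sec S U' \<and>
     germ S x U s = germ S x U' s' \<and> germ S x U (scl S c s) = germ S x U' (scl S c s')"
    using assms by blast
next
  fix d assume "\<exists>U' s'. open U' \<and> x \<in> U' \<and> s' \<in> sec S U' \<and>
     germ S x U s = germ S x U' s' \<and> d = germ S x U' (scl S c s')"
  then obtain U' s' where H: "open U'" "x \<in> U'" "s' \<in> sec S U'"
     "germ S x U s = germ S x U' s'" "d = germ S x U' (scl S c s')" by blast
  obtain W1 where W1: "open W1" "x \<in> W1" "W1 \<subseteq> U \<inter> U'" "res S U W1 s = res S U' W1 s'"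
    using H germ_eq_iff[OF S] assms by metis
  have "res S U W1 (scl S c s) = res S U' W1 (scl S c s')"
    using W1 sh_res_scl[OF S, of U W1 s] sh_res_scl[OF S, of U' W1 s'] H assms by auto
  then show "d = germ S x U (scl S c s)" unfolding H(5)
    using W1 H assms sh_scl_sec[OF S] by (subst germ_eq_iff[OF S]) (auto intro!: exI[of _ W1])
qed

lemma stalk_map_germ:
  assumes S: "is_sheaf S" and S': "is_sheaf S'" and T: "sheaf_hom_on UNIV S S' T"
    and "open U" "x \<in> U" "s \<in> sec S U"
  shows "stalk_map S S' T x (germ S x U s) = germ S' x U (T U s)"
  unfolding stalk_map_def
proof (rule the_equality)
  show "\<exists>U' s'. open U' \<and> x \<in> U' \<and> s' \<in> sec S U' \<and> germ S x U s = germ S x U' s' \<and> germ S' x U (T U s) = germ S' x U' (T U' s')"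
    using assms by blast
next
  fix b assume "\<exists>U' s'. open U' \<and> x \<in> U' \<and> s' \<in> sec S U' \<and> germ S x U s = germ S x U' s' \<and> b = germ S' x U' (T U' s')"
  then obtain U' s' where H: "open U'" "x \<in> U'" "s' \<in> sec S U'" "germ S x U s = germ S x U' s'" "b = germ S' x U' (T U' s')" by blast
  obtain W1 where W1: "open W1" "x \<in> W1" "W1 \<subseteq> U \<inter> U'" "res S U W1 s = res S U' W1 s'"
    using H germ_eq_iff[OF S] assms by metis
  have Tm: "\<And>V V' s. open V \<Longrightarrow> open V' \<Longrightarrow> V' \<subseteq> V \<Longrightarrow> s \<in> sec S V \<Longrightarrow> T V' (res S V V' s) = res S' V V' (T V s)"
    and Ts: "\<And>V s. open V \<Longrightarrow> s \<in> sec S V \<Longrightarrow> T V s \<in> sec S' V"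
    using T unfolding sheaf_hom_on_def by simp_all
  have "res S' U W1 (T U s) = res S' U' W1 (T U' s')"
    using Tm[of U W1 s] Tm[of U' W1 s'] W1 H assms by auto
  then show "b = germ S' x U (T U s)" unfolding H(5)
    using W1 H assms Ts by (subst germ_eq_iff[OF S']) (auto intro!: exI[of _ W1])
qed


lemma simple_germ_bij:
  assumes S: "is_sheaf S" and W: "open W" "connected W" "simple_for S W" "x \<in> W"
  shows "bij_betw (germ S x W) (sec S W) (stalk S x)"
proof -
  obtain E T where E: "module.subspace (scl S) E" and iso: "sheaf_iso_on W S (const_sheaf (scl S) E) T"
    using W unfolding simple_for_def by blast
  let ?C = "const_sheaf (scl S) E"
  have secC: "sec ?C V = {f. (\<forall>x\<in>V. f x \<in> E) \<and> (\<forall>x. x \<notin> V \<longrightarrow> f x = 0) \<and>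
                     (\<forall>x\<in>V. \<exists>W. open W \<and> x \<in> W \<and> W \<subseteq> V \<and> (\<forall>y\<in>W. f y = f x))}" for V
    unfolding const_sheaf_def by simp
  have resC: "res ?C V V' f = (\<lambda>z. if z \<in> V' then f z else 0)" for V V' f
    unfolding const_sheaf_def by simp
  have Tnat: "\<And>V V' s. open V \<Longrightarrow> open V' \<Longrightarrow> V' \<subseteq> V \<Longrightarrow> V \<subseteq> W \<Longrightarrow> s \<in> sec S V \<Longrightarrow> T V' (res S V V' s) = res ?C V V' (T V s)"
    using iso unfolding sheaf_iso_on_def sheaf_hom_on_def by simp
  have Tbij: "\<And>V. open V \<Longrightarrow> V \<subseteq> W \<Longrightarrow> bij_betw (T V) (sec S V) (sec ?C V)"
    using iso unfolding sheaf_iso_on_def by simp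
  have inj: "inj_on (germ S x W) (sec S W)"
  proof (rule inj_onI)
    fix s t assume st: "s \<in> sec S W" "t \<in> sec S W" "germ S x W s = germ S x W t"
    then obtain W0 where W0: "open W0" "x \<in> W0" "W0 \<subseteq> W" "res S W W0 s = res S W W0 t"
      using germ_eq_iff[OF S W(1) W(1) W(4) W(4)] by auto
    define f where "f = T W s"
    define g where "g = T W t"
    have f: "f \<in> sec ?C W" and g: "g \<in> sec ?C W" unfolding f_def g_def using Tbij[OF W(1)] st
      by (auto simp: bij_betw_def)
    have "res ?C W W0 f = res ?C W W0 g" unfolding f_def g_def
      using Tnat[OF W(1) W0(1) W0(3)] st W0 by (metis order_refl)
    then have eqW0: "\<forall>z\<in>W0. f z = g z" unfolding resC by meson
    define A where "A = {z\<in>W. f z = g z}"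
    define B where "B = {z\<in>W. f z \<noteq> g z}"
    have loc: "\<exists>N. open N \<and> z \<in> N \<and> N \<subseteq> W \<and> (\<forall>y\<in>N. f y = f z \<and> g y = g z)" if zW: "z \<in> W" for z
    proof -
      have lf: "\<forall>x\<in>W. \<exists>N. open N \<and> x \<in> N \<and> N \<subseteq> W \<and> (\<forall>y\<in>N. f y = f x)" using f unfolding secC by simp
      have lg: "\<forall>x\<in>W. \<exists>N. open N \<and> x \<in> N \<and> N \<subseteq> W \<and> (\<forall>y\<in>N. g y = g x)" using g unfolding secC by simp
      obtain N1 where "open N1" "z \<in> N1" "N1 \<subseteq> W" "\<forall>y\<in>N1. f y = f z" using bspec[OF lf zW] by (elim exE conjE)
      moreover obtain N2 where "open N2" "z \<in> N2" "N2 \<subseteq> W" "\<forall>y\<in>N2. g y = g z" using bspec[OF lg zW] by (elim exE conjE)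
      ultimately show ?thesis by (intro exI[of _ "N1 \<inter> N2"] conjI open_Int) blast+
    qed
    have oA: "open A" unfolding open_subopen[of A]
    proof
      fix z assume "z \<in> A"
      then have zW: "z \<in> W" unfolding A_def by blast
      obtain N where N: "open N" "z \<in> N" "N \<subseteq> W" "\<forall>y\<in>N. f y = f z \<and> g y = g z" using loc[OF zW] by blast
      have fz: "f z = g z" using \<open>z \<in> A\<close> unfolding A_def by blast
      show "\<exists>T. open T \<and> z \<in> T \<and> T \<subseteq> A"
      proof (intro exI[of _ N] conjI N(1) N(2) subsetI)
        fix y assume y: "y \<in> N"
        have "f y = f z" "g y = g z" using N(4) y by auto
        then have "f y = g y" using fz by simp
        then show "y \<in> A" using N(3) y unfolding A_def by blast
      qed
    qed
    have oB: "open B" unfolding open_subopen[of B]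
    proof
      fix z assume "z \<in> B"
      then have zW: "z \<in> W" unfolding B_def by blast
      obtain N where N: "open N" "z \<in> N" "N \<subseteq> W" "\<forall>y\<in>N. f y = f z \<and> g y = g z" using loc[OF zW] by blast
      have fz: "f z \<noteq> g z" using \<open>z \<in> B\<close> unfolding B_def by blast
      show "\<exists>T. open T \<and> z \<in> T \<and> T \<subseteq> B"
      proof (intro exI[of _ N] conjI N(1) N(2) subsetI)
        fix y assume y: "y \<in> N"
        have "f y = f z" "g y = g z" using N(4) y by auto
        then have "f y \<noteq> g y" using fz by simp
        then show "y \<in> B" using N(3) y unfolding B_def by blast
      qed
    qed
    have "B = {}"
    proof (rule ccontr)
      assume "B \<noteq> {}"
      moreover have "x \<in> A" using eqW0 W0 unfolding A_def by auto
      ultimately show False using W(2) oA oB unfolding connected_def A_def B_def by blast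
    qed
    then have "f = g" using f g unfolding B_def secC by (auto intro!: ext)
    then show "s = t" using Tbij[OF W(1)] st unfolding f_def g_def bij_betw_def inj_on_def by blast
  qed
  have sur: "stalk S x \<subseteq> germ S x W ` sec S W"
  proof
    fix a assume "a \<in> stalk S x"
    then obtain V u where Vu: "a = germ S x V u" "open V" "x \<in> V" "u \<in> sec S V" unfolding stalk_def by blast
    define W0 where "W0 = V \<inter> W"
    have oW0: "open W0" "x \<in> W0" "W0 \<subseteq> W" "W0 \<subseteq> V" using Vu W unfolding W0_def by auto
    define u0 where "u0 = res S V W0 u"
    have u0: "u0 \<in> sec S W0" unfolding u0_def using sh_res_sec[OF S] Vu oW0 by blast
    define f0 where "f0 = T W0 u0"
    have f0: "f0 \<in> sec ?C W0" unfolding f0_def using Tbij[OF oW0(1) oW0(3)] u0 by (auto simp: bij_betw_def)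
    obtain W1 where W1: "open W1" "x \<in> W1" "W1 \<subseteq> W0" "\<forall>y\<in>W1. f0 y = f0 x" using f0 oW0 unfolding secC by blast
    define e where "e = f0 x"
    have eE: "e \<in> E" using f0 oW0 unfolding secC e_def by blast
    define c where "c = (\<lambda>z. if z \<in> W then e else 0)"
    have cC: "c \<in> sec ?C W" unfolding secC c_def using eE W(1) by auto
    define s where "s = inv_into (sec S W) (T W) c"
    have s: "s \<in> sec S W" "T W s = c" using Tbij[OF W(1)] cC unfolding s_def
      by (auto simp: bij_betw_def inv_into_into f_inv_into_f)
    have r1: "res S W W1 s \<in> sec S W1" using sh_res_sec[OF S W(1) W1(1)] s W1 oW0 by auto
    have r2: "res S V W1 u \<in> sec S W1" using sh_res_sec[OF S Vu(2) W1(1)] Vu W1 oW0 by auto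
    have "T W1 (res S W W1 s) = res ?C W W1 c" using Tnat[OF W(1) W1(1)] s W1 oW0 by auto
    also have "\<dots> = res ?C W0 W1 f0" unfolding resC c_def e_def
    proof (rule ext)
      fix z
      show "(if z \<in> W1 then if z \<in> W then f0 x else 0 else 0) = (if z \<in> W1 then f0 z else 0)"
      proof (cases "z \<in> W1")
        case True
        then have "f0 z = f0 x" "z \<in> W" using bspec[OF W1(4) True] W1(3) oW0(3) by blast+
        then show ?thesis using True by simp
      qed simp
    qed
    also have "\<dots> = T W1 (res S W0 W1 u0)" unfolding f0_def using Tnat[OF oW0(1) W1(1) W1(3) oW0(3) u0] by simp
    also have "res S W0 W1 u0 = res S V W1 u" unfolding u0_def
      using sh_res_trans[OF S Vu(2) oW0(1) W1(1) W1(3) oW0(4) Vu(4)] .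
    finally have "res S W W1 s = res S V W1 u"
      using Tbij[OF W1(1)] r1 r2 W1 oW0 unfolding bij_betw_def inj_on_def by blast
    then have "germ S x W s = a" unfolding Vu(1)
      using W1 oW0 by (subst germ_eq_iff[OF S W(1) Vu(2) W(4) Vu(3) s(1) Vu(4)]) (auto intro!: exI[of _ W1])
    then show "a \<in> germ S x W ` sec S W" using s by blast
  qed
  have "germ S x W ` sec S W \<subseteq> stalk S x" using germ_in_stalk[OF W(1) W(4), of _ S] by blast
  then show ?thesis using inj sur by (auto simp: bij_betw_def)
qed

lemma iso_sub: "sheaf_iso_on U S S' T \<Longrightarrow> W \<subseteq> U \<Longrightarrow> sheaf_iso_on W S S' T"
  unfolding sheaf_iso_on_def sheaf_hom_on_def
  apply (elim conjE)
  apply (intro conjI allI impI)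
  apply (meson dual_order.trans)+
  done

lemma simple_for_sub: "simple_for S U \<Longrightarrow> W \<subseteq> U \<Longrightarrow> simple_for S W"
  unfolding simple_for_def using iso_sub by blast


definition theta :: "('a \<Rightarrow> ('a set \<times> 'g) set \<Rightarrow> ('a set \<times> 'f) set) \<Rightarrow> ('a \<Rightarrow> ('a set \<times> 'g) set \<Rightarrow> ('a set \<times> 'h) set)
   \<Rightarrow> ('a::topological_space, 'k, 'g) sheaf \<Rightarrow> 'a \<Rightarrow> ('a set \<times> 'f) set \<Rightarrow> ('a set \<times> 'h) set" where
  "theta \<Phi> \<Psi> G x a = \<Psi> x (inv_into (stalk G x) (\<Phi> x) a)"

lemma swi_bij: "stalkwise_iso G F \<Phi> \<Longrightarrow> bij_betw (\<Phi> x) (stalk G x) (stalk F x)"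
  unfolding stalkwise_iso_def stalk_lin_iso_def by blast

lemma basis:
  fixes G :: "('a::topological_space, 'k::field, 'g::ab_group_add) sheaf"
    and F :: "('a, 'k, 'f::ab_group_add) sheaf"
    and F' :: "('a, 'k, 'h::ab_group_add) sheaf"
  assumes lc: "locally connected (UNIV :: 'a set)"
    and "locally_constant_sheaf G" "locally_constant_sheaf F" "locally_constant_sheaf F'"
    and "open V" "x \<in> V"
  shows "\<exists>W. open W \<and> connected W \<and> x \<in> W \<and> W \<subseteq> V \<and> simple_for G W \<and> simple_for F W \<and> simple_for F' W"
proof -
  obtain U1 where U1: "open U1" "x \<in> U1" "simple_for G U1" using assms unfolding locally_constant_sheaf_def by blast
  obtain U2 where U2: "open U2" "x \<in> U2" "simple_for F U2" using assms unfolding locally_constant_sheaf_def by blast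
  obtain U3 where U3: "open U3" "x \<in> U3" "simple_for F' U3" using assms unfolding locally_constant_sheaf_def by blast
  let ?V = "V \<inter> U1 \<inter> U2 \<inter> U3"
  have "open ?V" "x \<in> ?V" using U1 U2 U3 assms by auto
  then obtain W where W: "open W" "connected W" "x \<in> W" "W \<subseteq> ?V"
    using lc unfolding locally_connected by (metis open_openin subtopology_UNIV)
  then show ?thesis
    by (intro exI[of _ W]) (auto intro: simple_for_sub[OF U1(3)] simple_for_sub[OF U2(3)] simple_for_sub[OF U3(3)])
qed

lemma local_exists:
  fixes G :: "('a::topological_space, 'k::field, 'g::ab_group_add) sheaf"
    and F :: "('a, 'k, 'f::ab_group_add) sheaf"
    and F' :: "('a, 'k, 'h::ab_group_add) sheaf"
    and \<Phi> :: "'a \<Rightarrow> ('a set \<times> 'g) set \<Rightarrow> ('a set \<times> 'f) set"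
    and \<Psi> :: "'a \<Rightarrow> ('a set \<times> 'g) set \<Rightarrow> ('a set \<times> 'h) set"
  assumes SG: "is_sheaf G" and SF: "is_sheaf F" and SF': "is_sheaf F'"
    and P: "stalkwise_iso G F \<Phi>" and Q: "stalkwise_iso G F' \<Psi>"
    and dev: "\<forall>x y U. open U \<and> connected U \<and> x \<in> U \<and> y \<in> U \<and>
           simple_for G U \<and> simple_for F U \<and> simple_for F' U \<longrightarrow>
           (\<forall>s\<in>sec G U. deviation G F \<Phi> U y x s = deviation G F' \<Psi> U y x s)"
    and W: "open W" "connected W" "simple_for G W" "simple_for F W" "simple_for F' W" "x \<in> W"
    and s: "s \<in> sec F W"
  shows "\<exists>t\<in>sec F' W. \<forall>z\<in>W. germ F' z W t = theta \<Phi> \<Psi> G z (germ F z W s)"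
proof -
  have bG: "\<And>z. z \<in> W \<Longrightarrow> bij_betw (germ G z W) (sec G W) (stalk G z)"
    using simple_germ_bij[OF SG W(1,2,3)] by blast
  have bF: "\<And>z. z \<in> W \<Longrightarrow> bij_betw (germ F z W) (sec F W) (stalk F z)"
    using simple_germ_bij[OF SF W(1,2,4)] by blast
  have bF': "\<And>z. z \<in> W \<Longrightarrow> bij_betw (germ F' z W) (sec F' W) (stalk F' z)"
    using simple_germ_bij[OF SF' W(1,2,5)] by blast
  have bP: "\<And>z. bij_betw (\<Phi> z) (stalk G z) (stalk F z)" using swi_bij[OF P] .
  have bQ: "\<And>z. bij_betw (\<Psi> z) (stalk G z) (stalk F' z)" using swi_bij[OF Q] .
  define a where "a = germ F x W s"
  have a: "a \<in> stalk F x" unfolding a_def using germ_in_stalk[OF W(1) W(6) s] .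
  define b where "b = inv_into (stalk G x) (\<Phi> x) a"
  have b: "b \<in> stalk G x" "\<Phi> x b = a" unfolding b_def using bP a
    by (auto simp: bij_betw_def inv_into_into f_inv_into_f)
  define g where "g = inv_into (sec G W) (germ G x W) b"
  have g: "g \<in> sec G W" "germ G x W g = b" unfolding g_def using bG[OF W(6)] b
    by (auto simp: bij_betw_def inv_into_into f_inv_into_f)
  have Qb: "\<Psi> x b \<in> stalk F' x" using bQ b by (auto simp: bij_betw_def)
  define t where "t = inv_into (sec F' W) (germ F' x W) (\<Psi> x b)"
  have t: "t \<in> sec F' W" "germ F' x W t = \<Psi> x b" unfolding t_def using bF'[OF W(6)] Qb
    by (auto simp: bij_betw_def inv_into_into f_inv_into_f)
  have invs: "inv_into (sec F W) (germ F x W) a = s" unfolding a_def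
    using bF[OF W(6)] s by (simp add: bij_betw_def inv_into_f_f)
  have invt: "inv_into (sec F' W) (germ F' x W) (\<Psi> x b) = t" by (simp add: t_def)
  show ?thesis
  proof (intro bexI[OF _ t(1)] ballI)
    fix z assume z: "z \<in> W"
    have "deviation G F \<Phi> W z x g = deviation G F' \<Psi> W z x g" using dev W z g by blast
    then have E: "inv_into (sec G W) (germ G z W) (inv_into (stalk G z) (\<Phi> z) (germ F z W s))
        = inv_into (sec G W) (germ G z W) (inv_into (stalk G z) (\<Psi> z) (germ F' z W t))"
      unfolding deviation_def g(2) b(2) invs invt .
    have aF: "germ F z W s \<in> stalk F z" using germ_in_stalk[OF W(1) z s] .
    have aF': "germ F' z W t \<in> stalk F' z" using germ_in_stalk[OF W(1) z t(1)] .
    have i1: "inv_into (stalk G z) (\<Phi> z) (germ F z W s) \<in> stalk G z"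
      using bP aF by (auto simp: bij_betw_def inv_into_into)
    have i2: "inv_into (stalk G z) (\<Psi> z) (germ F' z W t) \<in> stalk G z"
      using bQ aF' by (auto simp: bij_betw_def inv_into_into)
    have "inj_on (inv_into (sec G W) (germ G z W)) (stalk G z)"
      using bij_betw_inv_into[OF bG[OF z]] by (simp add: bij_betw_def)
    then have "inv_into (stalk G z) (\<Phi> z) (germ F z W s) = inv_into (stalk G z) (\<Psi> z) (germ F' z W t)"
      using E i1 i2 by (meson inj_onD)
    then show "germ F' z W t = theta \<Phi> \<Psi> G z (germ F z W s)" unfolding theta_def
      using bQ aF' by (simp add: bij_betw_def f_inv_into_f)
  qed
qed


lemma glob_exists:
  fixes G :: "('a::topological_space, 'k::field, 'g::ab_group_add) sheaf"
    and F :: "('a, 'k, 'f::ab_group_add) sheaf"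
    and F' :: "('a, 'k, 'h::ab_group_add) sheaf"
    and \<Phi> :: "'a \<Rightarrow> ('a set \<times> 'g) set \<Rightarrow> ('a set \<times> 'f) set"
    and \<Psi> :: "'a \<Rightarrow> ('a set \<times> 'g) set \<Rightarrow> ('a set \<times> 'h) set"
  assumes lc: "locally connected (UNIV :: 'a set)"
    and LG: "locally_constant_sheaf G" and LF: "locally_constant_sheaf F" and LF': "locally_constant_sheaf F'"
    and P: "stalkwise_iso G F \<Phi>" and Q: "stalkwise_iso G F' \<Psi>"
    and dev: "\<forall>x y U. open U \<and> connected U \<and> x \<in> U \<and> y \<in> U \<and>
           simple_for G U \<and> simple_for F U \<and> simple_for F' U \<longrightarrow>
           (\<forall>s\<in>sec G U. deviation G F \<Phi> U y x s = deviation G F' \<Psi> U y x s)"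
    and V: "open V" and s: "s \<in> sec F V"
  shows "\<exists>t\<in>sec F' V. \<forall>z\<in>V. germ F' z V t = theta \<Phi> \<Psi> G z (germ F z V s)"
proof -
  have SG: "is_sheaf G" and SF: "is_sheaf F" and SF': "is_sheaf F'"
    using LG LF LF' unfolding locally_constant_sheaf_def by auto
  have "\<forall>x\<in>V. \<exists>W. open W \<and> connected W \<and> x \<in> W \<and> W \<subseteq> V \<and> simple_for G W \<and> simple_for F W \<and> simple_for F' W"
    using basis[OF lc LG LF LF' V] by blast
  then obtain Wf where Wf: "\<And>x. x \<in> V \<Longrightarrow> open (Wf x) \<and> connected (Wf x) \<and> x \<in> Wf x \<and> Wf x \<subseteq> V \<and>
      simple_for G (Wf x) \<and> simple_for F (Wf x) \<and> simple_for F' (Wf x)" by metis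
  let ?C = "Wf ` V"
  define f where "f W = (SOME t. t \<in> sec F' W \<and> (\<forall>z\<in>W. germ F' z W t = theta \<Phi> \<Psi> G z (germ F z V s)))" for W
  have fW: "f W \<in> sec F' W \<and> (\<forall>z\<in>W. germ F' z W (f W) = theta \<Phi> \<Psi> G z (germ F z V s))" if WC: "W \<in> ?C" for W
  proof -
    obtain x where x: "x \<in> V" "W = Wf x" using WC by blast
    note Wx = Wf[OF x(1), folded x(2)]
    have rs: "res F V W s \<in> sec F W" using sh_res_sec[OF SF V] Wx s by blast
    obtain t where t: "t \<in> sec F' W" "\<forall>z\<in>W. germ F' z W t = theta \<Phi> \<Psi> G z (germ F z W (res F V W s))"
      using local_exists[OF SG SF SF' P Q dev, of W x "res F V W s"] Wx rs by blast
    have "\<forall>z\<in>W. germ F z W (res F V W s) = germ F z V s" using germ_res[OF SF V] Wx s by blast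
    then have "\<exists>t. t \<in> sec F' W \<and> (\<forall>z\<in>W. germ F' z W t = theta \<Phi> \<Psi> G z (germ F z V s))" using t by auto
    then show ?thesis unfolding f_def by (rule someI_ex)
  qed
  have oC: "\<forall>W\<in>?C. open W" using Wf by blast
  have uC: "\<Union>?C = V" using Wf by blast
  have "\<exists>t\<in>sec F' V. \<forall>W\<in>?C. res F' V W t = f W"
  proof (rule sh_glue[OF SF' V oC uC])
    show "\<forall>W\<in>?C. f W \<in> sec F' W" using fW by blast
    show "\<forall>W1\<in>?C. \<forall>W2\<in>?C. res F' W1 (W1 \<inter> W2) (f W1) = res F' W2 (W1 \<inter> W2) (f W2)"
    proof (intro ballI)
      fix W1 W2 assume W: "W1 \<in> ?C" "W2 \<in> ?C"
      have o: "open W1" "open W2" "open (W1 \<inter> W2)" using W oC by auto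
      show "res F' W1 (W1 \<inter> W2) (f W1) = res F' W2 (W1 \<inter> W2) (f W2)"
      proof (rule germ_locality[OF SF' o(3)])
        show "res F' W1 (W1 \<inter> W2) (f W1) \<in> sec F' (W1 \<inter> W2)" using sh_res_sec[OF SF' o(1) o(3)] fW W by blast
        show "res F' W2 (W1 \<inter> W2) (f W2) \<in> sec F' (W1 \<inter> W2)" using sh_res_sec[OF SF' o(2) o(3)] fW W by blast
        show "\<forall>x\<in>W1 \<inter> W2. germ F' x (W1 \<inter> W2) (res F' W1 (W1 \<inter> W2) (f W1)) = germ F' x (W1 \<inter> W2) (res F' W2 (W1 \<inter> W2) (f W2))"
          using germ_res[OF SF' o(1) o(3)] germ_res[OF SF' o(2) o(3)] fW W by auto
      qed
    qed
  qed
  then obtain t where t: "t \<in> sec F' V" "\<forall>W\<in>?C. res F' V W t = f W" by blast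
  show ?thesis
  proof (intro bexI[OF _ t(1)] ballI)
    fix z assume z: "z \<in> V"
    have W: "Wf z \<in> ?C" using z by blast
    have "germ F' z V t = germ F' z (Wf z) (res F' V (Wf z) t)" using germ_res[OF SF' V, of "Wf z" z t] Wf[OF z] t by simp
    also have "\<dots> = germ F' z (Wf z) (f (Wf z))" using bspec[OF t(2) W] by simp
    also have "\<dots> = theta \<Phi> \<Psi> G z (germ F z V s)" using fW[OF W] Wf[OF z] by blast
    finally show "germ F' z V t = theta \<Phi> \<Psi> G z (germ F z V s)" .
  qed
qed


lemma common_rep:
  assumes S: "is_sheaf S" and "a \<in> stalk S x" "b \<in> stalk S x"
  shows "\<exists>U s t. open U \<and> x \<in> U \<and> s \<in> sec S U \<and> t \<in> sec S U \<and> a = germ S x U s \<and> b = germ S x U t"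
proof -
  obtain U1 s1 where 1: "open U1" "x \<in> U1" "s1 \<in> sec S U1" "a = germ S x U1 s1" using assms unfolding stalk_def by blast
  obtain U2 s2 where 2: "open U2" "x \<in> U2" "s2 \<in> sec S U2" "b = germ S x U2 s2" using assms unfolding stalk_def by blast
  let ?U = "U1 \<inter> U2"
  have o: "open ?U" "x \<in> ?U" using 1 2 by auto
  have r1: "res S U1 ?U s1 \<in> sec S ?U" using sh_res_sec[OF S 1(1) o(1) _ 1(3)] by blast
  have r2: "res S U2 ?U s2 \<in> sec S ?U" using sh_res_sec[OF S 2(1) o(1) _ 2(3)] by blast
  have g1: "a = germ S x ?U (res S U1 ?U s1)" using germ_res[OF S 1(1) o(1) o(2) _ 1(3)] 1(4) by simp
  have g2: "b = germ S x ?U (res S U2 ?U s2)" using germ_res[OF S 2(1) o(1) o(2) _ 2(3)] 2(4) by simp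
  show ?thesis using o r1 r2 g1 g2 by blast
qed

lemma stalk_add_closed: "is_sheaf S \<Longrightarrow> a \<in> stalk S x \<Longrightarrow> b \<in> stalk S x \<Longrightarrow> stalk_add S x a b \<in> stalk S x"
  by (metis common_rep germ_add germ_in_stalk sh_add_sec)

lemma stalk_scale_closed: "is_sheaf S \<Longrightarrow> a \<in> stalk S x \<Longrightarrow> stalk_scale S x c a \<in> stalk S x"
  by (metis common_rep germ_scl germ_in_stalk sh_scl_sec)

lemma theta_props:
  assumes SG: "is_sheaf G" and P: "stalkwise_iso G F \<Phi>" and Q: "stalkwise_iso G F' \<Psi>"
  shows "a \<in> stalk F z \<Longrightarrow> theta \<Phi> \<Psi> G z a \<in> stalk F' z"
    and "inj_on (theta \<Phi> \<Psi> G z) (stalk F z)"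
    and "a1 \<in> stalk F z \<Longrightarrow> a2 \<in> stalk F z \<Longrightarrow>
         theta \<Phi> \<Psi> G z (stalk_add F z a1 a2) = stalk_add F' z (theta \<Phi> \<Psi> G z a1) (theta \<Phi> \<Psi> G z a2)"
    and "a \<in> stalk F z \<Longrightarrow> theta \<Phi> \<Psi> G z (stalk_scale F z c a) = stalk_scale F' z c (theta \<Phi> \<Psi> G z a)"
proof -
  have bP: "bij_betw (\<Phi> z) (stalk G z) (stalk F z)" using swi_bij[OF P] .
  have bQ: "bij_betw (\<Psi> z) (stalk G z) (stalk F' z)" using swi_bij[OF Q] .
  have lP: "stalk_lin_iso G F z (\<Phi> z)" and lQ: "stalk_lin_iso G F' z (\<Psi> z)"
    using P Q unfolding stalkwise_iso_def by auto
  have iv: "\<And>a. a \<in> stalk F z \<Longrightarrow> inv_into (stalk G z) (\<Phi> z) a \<in> stalk G z \<and> \<Phi> z (inv_into (stalk G z) (\<Phi> z) a) = a"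
    using bP by (auto simp: bij_betw_def inv_into_into f_inv_into_f)
  have ivb: "\<And>b. b \<in> stalk G z \<Longrightarrow> inv_into (stalk G z) (\<Phi> z) (\<Phi> z b) = b"
    using bP by (auto simp: bij_betw_def inv_into_f_f)
  show "a \<in> stalk F z \<Longrightarrow> theta \<Phi> \<Psi> G z a \<in> stalk F' z"
    unfolding theta_def using iv bQ by (auto simp: bij_betw_def)
  show "inj_on (theta \<Phi> \<Psi> G z) (stalk F z)"
    unfolding theta_def
    by (rule comp_inj_on[unfolded o_def, OF _ inj_on_subset[OF _ subset_refl]])
       (use bP bQ bij_betw_inv_into[OF bP] in \<open>auto simp: bij_betw_def inv_into_into\<close>)
  show "a1 \<in> stalk F z \<Longrightarrow> a2 \<in> stalk F z \<Longrightarrow>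
         theta \<Phi> \<Psi> G z (stalk_add F z a1 a2) = stalk_add F' z (theta \<Phi> \<Psi> G z a1) (theta \<Phi> \<Psi> G z a2)"
  proof -
    assume a: "a1 \<in> stalk F z" "a2 \<in> stalk F z"
    let ?b1 = "inv_into (stalk G z) (\<Phi> z) a1" and ?b2 = "inv_into (stalk G z) (\<Phi> z) a2"
    have b: "?b1 \<in> stalk G z" "?b2 \<in> stalk G z" "\<Phi> z ?b1 = a1" "\<Phi> z ?b2 = a2" using iv a by auto
    have "\<Phi> z (stalk_add G z ?b1 ?b2) = stalk_add F z a1 a2" using lP b unfolding stalk_lin_iso_def by metis
    then have "inv_into (stalk G z) (\<Phi> z) (stalk_add F z a1 a2) = stalk_add G z ?b1 ?b2"
      using ivb stalk_add_closed[OF SG b(1,2)] by metis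
    then show ?thesis unfolding theta_def using lQ b unfolding stalk_lin_iso_def by metis
  qed
  show "a \<in> stalk F z \<Longrightarrow> theta \<Phi> \<Psi> G z (stalk_scale F z c a) = stalk_scale F' z c (theta \<Phi> \<Psi> G z a)"
  proof -
    assume a: "a \<in> stalk F z"
    let ?b = "inv_into (stalk G z) (\<Phi> z) a"
    have b: "?b \<in> stalk G z" "\<Phi> z ?b = a" using iv a by auto
    have "\<Phi> z (stalk_scale G z c ?b) = stalk_scale F z c a" using lP b unfolding stalk_lin_iso_def by metis
    then have "inv_into (stalk G z) (\<Phi> z) (stalk_scale F z c a) = stalk_scale G z c ?b"
      using ivb stalk_scale_closed[OF SG b(1)] by metis
    then show ?thesis unfolding theta_def using lQ b unfolding stalk_lin_iso_def by metis
  qed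
qed

lemma theta_inv:
  assumes P: "stalkwise_iso G F \<Phi>" and Q: "stalkwise_iso G F' \<Psi>" and c: "c \<in> stalk F' z"
  shows "theta \<Phi> \<Psi> G z (theta \<Psi> \<Phi> G z c) = c"
proof -
  have bP: "bij_betw (\<Phi> z) (stalk G z) (stalk F z)" using swi_bij[OF P] .
  have bQ: "bij_betw (\<Psi> z) (stalk G z) (stalk F' z)" using swi_bij[OF Q] .
  have "inv_into (stalk G z) (\<Psi> z) c \<in> stalk G z" using bQ c by (auto simp: bij_betw_def inv_into_into)
  then show ?thesis unfolding theta_def using bP bQ c by (simp add: bij_betw_def inv_into_f_f f_inv_into_f)
qed


definition Tmap where
  "Tmap G F F' \<Phi> \<Psi> V s = (THE t. t \<in> sec F' V \<and> (\<forall>z\<in>V. germ F' z V t = theta \<Phi> \<Psi> G z (germ F z V s)))"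

locale mt =
  fixes G :: "('a::topological_space, 'k::field, 'g::ab_group_add) sheaf"
    and F :: "('a, 'k, 'f::ab_group_add) sheaf"
    and F' :: "('a, 'k, 'h::ab_group_add) sheaf"
    and \<Phi> :: "'a \<Rightarrow> ('a set \<times> 'g) set \<Rightarrow> ('a set \<times> 'f) set"
    and \<Psi> :: "'a \<Rightarrow> ('a set \<times> 'g) set \<Rightarrow> ('a set \<times> 'h) set"
  assumes lc: "locally connected (UNIV :: 'a set)"
    and LG: "locally_constant_sheaf G"
    and LF: "locally_constant_sheaf F"
    and LF': "locally_constant_sheaf F'"
    and P: "stalkwise_iso G F \<Phi>"
    and Q: "stalkwise_iso G F' \<Psi>"
    and dev: "\<forall>x y U. open U \<and> connected U \<and> x \<in> U \<and> y \<in> U \<and>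
           simple_for G U \<and> simple_for F U \<and> simple_for F' U \<longrightarrow>
           (\<forall>s\<in>sec G U. deviation G F \<Phi> U y x s = deviation G F' \<Psi> U y x s)"
begin

abbreviation "T \<equiv> Tmap G F F' \<Phi> \<Psi>"
abbreviation "th \<equiv> theta \<Phi> \<Psi> G"

lemma SG: "is_sheaf G" and SF: "is_sheaf F" and SF': "is_sheaf F'"
  using LG LF LF' unfolding locally_constant_sheaf_def by auto

lemma dev': "\<forall>x y U. open U \<and> connected U \<and> x \<in> U \<and> y \<in> U \<and>
           simple_for G U \<and> simple_for F' U \<and> simple_for F U \<longrightarrow>
           (\<forall>s\<in>sec G U. deviation G F' \<Psi> U y x s = deviation G F \<Phi> U y x s)"
  using dev by metis


lemma uniq: "t = T V s" if "open V" "s \<in> sec F V" "t \<in> sec F' V" "\<forall>z\<in>V. germ F' z V t = th z (germ F z V s)" for V s t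
proof -
  have *: "\<And>t'. t' \<in> sec F' V \<and> (\<forall>z\<in>V. germ F' z V t' = th z (germ F z V s)) \<Longrightarrow> t' = t"
  proof -
    fix t' assume t': "t' \<in> sec F' V \<and> (\<forall>z\<in>V. germ F' z V t' = th z (germ F z V s))"
    show "t' = t" using germ_locality[OF SF' that(1), of t' t] t' that(3,4) by simp
  qed
  show ?thesis unfolding Tmap_def
    apply (rule sym)
    apply (rule the_equality)
    using that(3,4) apply blast
    using * apply blast
    done
qed

lemma Tc: "T V s \<in> sec F' V \<and> (\<forall>z\<in>V. germ F' z V (T V s) = th z (germ F z V s))" if Vs: "open V" "s \<in> sec F V" for V s
proof -
  obtain t where t: "t \<in> sec F' V" "\<forall>z\<in>V. germ F' z V t = th z (germ F z V s)"
    using glob_exists[OF lc LG LF LF' P Q dev Vs] by blast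
  then have "t = T V s" using uniq[OF Vs] by blast
  then show ?thesis using t by simp
qed

lemma hom: "sheaf_hom_on UNIV F F' T"
  unfolding sheaf_hom_on_def
proof (intro conjI allI impI ballI)
  fix V s assume V: "open V \<and> V \<subseteq> UNIV" and s: "s \<in> sec F V"
  show "T V s \<in> sec F' V" using Tc V s by blast
next
  fix V s t assume V: "open V \<and> V \<subseteq> UNIV" and s: "s \<in> sec F V" and t: "t \<in> sec F V"
  have "T V s + T V t \<in> sec F' V" using sh_add_sec[OF SF'] Tc V s t by blast
  moreover have "\<forall>z\<in>V. germ F' z V (T V s + T V t) = th z (germ F z V (s + t))"
  proof
    fix z assume z: "z \<in> V"
    have "germ F' z V (T V s + T V t) = stalk_add F' z (germ F' z V (T V s)) (germ F' z V (T V t))"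
      using germ_add[OF SF'] Tc V s t z by metis
    also have "\<dots> = stalk_add F' z (th z (germ F z V s)) (th z (germ F z V t))" using Tc V s t z by metis
    also have "\<dots> = th z (stalk_add F z (germ F z V s) (germ F z V t))"
      using theta_props(3)[OF SG P Q] germ_in_stalk V s t z by metis
    also have "\<dots> = th z (germ F z V (s + t))" using germ_add[OF SF] V s t z by metis
    finally show "germ F' z V (T V s + T V t) = th z (germ F z V (s + t))" .
  qed
  ultimately show "T V (s + t) = T V s + T V t" using uniq V s t sh_add_sec[OF SF] by metis
next
  fix V c s assume V: "open V \<and> V \<subseteq> UNIV" and s: "s \<in> sec F V"
  have "scl F' c (T V s) \<in> sec F' V" using sh_scl_sec[OF SF'] Tc V s by blast
  moreover have "\<forall>z\<in>V. germ F' z V (scl F' c (T V s)) = th z (germ F z V (scl F c s))"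
  proof
    fix z assume z: "z \<in> V"
    have "germ F' z V (scl F' c (T V s)) = stalk_scale F' z c (germ F' z V (T V s))"
      using germ_scl[OF SF'] Tc V s z by metis
    also have "\<dots> = stalk_scale F' z c (th z (germ F z V s))" using Tc V s z by metis
    also have "\<dots> = th z (stalk_scale F z c (germ F z V s))"
      using theta_props(4)[OF SG P Q] germ_in_stalk V s z by metis
    also have "\<dots> = th z (germ F z V (scl F c s))" using germ_scl[OF SF] V s z by metis
    finally show "germ F' z V (scl F' c (T V s)) = th z (germ F z V (scl F c s))" .
  qed
  ultimately show "T V (scl F c s) = scl F' c (T V s)" using uniq V s sh_scl_sec[OF SF] by metis
next
  fix V V' s assume V: "open V \<and> open V' \<and> V' \<subseteq> V \<and> V \<subseteq> UNIV" and s: "s \<in> sec F V"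
  have r: "res F V V' s \<in> sec F V'" using sh_res_sec[OF SF] V s by blast
  have "res F' V V' (T V s) \<in> sec F' V'" using sh_res_sec[OF SF'] Tc V s by blast
  moreover have "\<forall>z\<in>V'. germ F' z V' (res F' V V' (T V s)) = th z (germ F z V' (res F V V' s))"
  proof
    fix z assume z: "z \<in> V'"
    have "germ F' z V' (res F' V V' (T V s)) = germ F' z V (T V s)"
      using germ_res[OF SF'] Tc V s z by blast
    also have "\<dots> = th z (germ F z V s)" using Tc V s z by blast
    also have "\<dots> = th z (germ F z V' (res F V V' s))" using germ_res[OF SF] V s z by metis
    finally show "germ F' z V' (res F' V V' (T V s)) = th z (germ F z V' (res F V V' s))" .
  qed
  ultimately show "T V' (res F V V' s) = res F' V V' (T V s)" using uniq V r by metis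
qed

lemma iso: "sheaf_iso_on UNIV F F' T"
  unfolding sheaf_iso_on_def
proof (intro conjI hom allI impI)
  fix V :: "'a set" assume V: "open V \<and> V \<subseteq> UNIV"
  have inj: "inj_on (T V) (sec F V)"
  proof (rule inj_onI)
    fix s t assume st: "s \<in> sec F V" "t \<in> sec F V" "T V s = T V t"
    have "\<forall>z\<in>V. germ F z V s = germ F z V t"
    proof
      fix z assume z: "z \<in> V"
      have "th z (germ F z V s) = th z (germ F z V t)" using Tc V st z by metis
      then show "germ F z V s = germ F z V t"
        using theta_props(2)[OF SG P Q] germ_in_stalk V st z by (meson inj_onD)
    qed
    then show "s = t" using germ_locality[OF SF] V st by blast
  qed
  have sur: "sec F' V \<subseteq> T V ` sec F V"
  proof
    fix u assume u: "u \<in> sec F' V"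
    obtain s where s: "s \<in> sec F V" "\<forall>z\<in>V. germ F z V s = theta \<Psi> \<Phi> G z (germ F' z V u)"
      using glob_exists[OF lc LG LF' LF Q P dev' _ u] V by blast
    have "\<forall>z\<in>V. germ F' z V u = th z (germ F z V s)"
      using s theta_inv[OF P Q] germ_in_stalk V u by metis
    then have "u = T V s" using uniq V s u by blast
    then show "u \<in> T V ` sec F V" using s by blast
  qed
  show "bij_betw (T V) (sec F V) (sec F' V)"
    unfolding bij_betw_def using inj sur Tc V by blast
qed

lemma stk: "\<Psi> x a = stalk_map F F' T x (\<Phi> x a)" if a: "a \<in> stalk G x" for x a
proof -
  have "\<Phi> x a \<in> stalk F x" using swi_bij[OF P] a by (auto simp: bij_betw_def)
  then obtain U s where U: "open U" "x \<in> U" "s \<in> sec F U" "\<Phi> x a = germ F x U s" unfolding stalk_def by blast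
  have "stalk_map F F' T x (\<Phi> x a) = germ F' x U (T U s)" using stalk_map_germ[OF SF SF' hom U(1-3)] U(4) by simp
  also have "\<dots> = th x (\<Phi> x a)" using Tc U by metis
  also have "\<dots> = \<Psi> x a" unfolding theta_def using swi_bij[OF P] a by (simp add: bij_betw_def inv_into_f_f)
  finally show ?thesis by simp
qed

lemma unique: "sheaf_iso_on UNIV F F' T' \<Longrightarrow> (\<forall>x. \<forall>a\<in>stalk G x. \<Psi> x a = stalk_map F F' T' x (\<Phi> x a)) \<Longrightarrow>
   open U \<Longrightarrow> s \<in> sec F U \<Longrightarrow> T' U s = T U s"
proof -
  assume T'1: "sheaf_iso_on UNIV F F' T'" and T'2: "\<forall>x. \<forall>a\<in>stalk G x. \<Psi> x a = stalk_map F F' T' x (\<Phi> x a)"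
    and U: "open U" and s: "s \<in> sec F U"
  have hom': "sheaf_hom_on UNIV F F' T'" using T'1 unfolding sheaf_iso_on_def by simp
  have "T' U s \<in> sec F' U" using hom' U s unfolding sheaf_hom_on_def by simp
  moreover have "\<forall>z\<in>U. germ F' z U (T' U s) = th z (germ F z U s)"
  proof
    fix z assume z: "z \<in> U"
    have g: "germ F z U s \<in> stalk F z" using germ_in_stalk[OF U z s] .
    let ?a = "inv_into (stalk G z) (\<Phi> z) (germ F z U s)"
    have a: "?a \<in> stalk G z" "\<Phi> z ?a = germ F z U s" using swi_bij[OF P] g
      by (auto simp: bij_betw_def inv_into_into f_inv_into_f)
    have "germ F' z U (T' U s) = stalk_map F F' T' z (germ F z U s)"
      using stalk_map_germ[OF SF SF' hom' U z s] by simp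
    also have "\<dots> = \<Psi> z ?a" using T'2 a by metis
    finally show "germ F' z U (T' U s) = th z (germ F z U s)" unfolding theta_def .
  qed
  ultimately show "T' U s = T U s" using uniq U s by blast
qed

end

theorem mainTheorem2:
  fixes G :: "('a::topological_space, 'k::field, 'g::ab_group_add) sheaf"
    and F :: "('a, 'k, 'f::ab_group_add) sheaf"
    and F' :: "('a, 'k, 'h::ab_group_add) sheaf"
    and \<Phi> :: "'a \<Rightarrow> ('a set \<times> 'g) set \<Rightarrow> ('a set \<times> 'f) set"
    and \<Psi> :: "'a \<Rightarrow> ('a set \<times> 'g) set \<Rightarrow> ('a set \<times> 'h) set"
  assumes "locally connected (UNIV :: 'a set)"
    and "locally_constant_sheaf G"
    and "locally_constant_sheaf F"
    and "locally_constant_sheaf F'"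
    and "stalkwise_iso G F \<Phi>"
    and "stalkwise_iso G F' \<Psi>"
    and "\<forall>x y U. open U \<and> connected U \<and> x \<in> U \<and> y \<in> U \<and>
           simple_for G U \<and> simple_for F U \<and> simple_for F' U \<longrightarrow>
           (\<forall>s\<in>sec G U. deviation G F \<Phi> U y x s = deviation G F' \<Psi> U y x s)"
  shows "\<exists>T. sheaf_iso_on UNIV F F' T \<and>
              (\<forall>x. \<forall>a\<in>stalk G x. \<Psi> x a = stalk_map F F' T x (\<Phi> x a)) \<and>
              (\<forall>T'. sheaf_iso_on UNIV F F' T' \<and>
                    (\<forall>x. \<forall>a\<in>stalk G x. \<Psi> x a = stalk_map F F' T' x (\<Phi> x a)) \<longrightarrow>
                    (\<forall>U. open U \<longrightarrow> (\<forall>s\<in>sec F U. T' U s = T U s)))"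
proof -
  interpret mt G F F' \<Phi> \<Psi> using assms by (rule mt.intro)
  show ?thesis
    apply (rule exI[of _ "Tmap G F F' \<Phi> \<Psi>"])
    using iso stk unique by blast
qed

end
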